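(* Let $k$ be an $\mathbf{F}_p$-algebra, $m\in\mathbf{N}\cup\{\infty\}$, $A:=k[[\pi]]/(\pi^{m+1})$, and let $\phi:A\to\operatorname{HS}^m(k)[[\pi]]/(\pi^{m+1})$ be the ring homomorphism $\phi(\sum_ia_i\pi^i)=\sum_{n=0}^m\sum_{i=0}^nd^{[n-i]}a_i\,\pi^n$. Let $\overline{\phi}:\operatorname{HS}^m(A)\to\operatorname{HS}^m(k)$ be its transpose, i.e. the ring homomorphism with $\overline{\phi}(d^{[n]}a)$ equal to the coefficient of $\pi^n$ in $\phi(a)$. Let $\iota:\operatorname{HS}^m(k)\to\operatorname{HS}^m(A)$ be induced by $k\subset A$, let $J$ be the ideal of $\operatorname{HS}^m(A)$ generated by $d^{[n]}\pi^i-\delta_{ni}$ ($0\le n\le m$, $i\ge0$), and $\rho:\operatorname{HS}^m(k)\to\operatorname{HS}^m(A)/J$ the composite of $\iota$ with the quotient map. Then $\overline{\phi}\circ\iota=\mathrm{id}$, $\overline{\phi}$ vanishes on $J$ and so induces $\overline{\phi}^\#:\operatorname{HS}^m(A)/J\to\operatorname{HS}^m(k)$, and $\overline{\phi}^\#\circ\rho=\mathrm{id}$. Hence $\rho$ is injective, and therefore (being surjective) an isomorphism.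
   Context: For a ring $R$ and $m\in\mathbf{N}\cup\{\infty\}$, $\operatorname{HS}^m(R):=\mathbf{Z}[d^{[n]}a\mid a\in R,0\le n\le m]/\sim$, where $\sim$ is generated by $d^{[n]}(a+b)=d^{[n]}a+d^{[n]}b$, $d^{[n]}(ab)=\sum_{i+j=n}d^{[i]}a\,d^{[j]}b$, and $d^{[0]}1=1$; ring homomorphisms $\operatorname{HS}^m(A)\to S$ correspond to ring homomorphisms $A\to S[[\pi]]/(\pi^{m+1})$ via $a\mapsto\sum_nf(d^{[n]}a)\pi^n$. Here $\pi^{\infty+1}:=0$; $\delta_{ni}$ is the Kronecker delta; $a_i\in k$ are the coefficients of $a\in A$. It is known that $\rho$ is surjective. *)

theory Defs
  imports "HOL-Library.Poly_Mapping" "HOL-Library.Extended_Nat" "HOL-Computational_Algebra.Primes"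
begin

text \<open>The polynomial ring Z[v | v :: 'v], as the monoid ring of monomials
  (finitely supported exponent maps) with integer coefficients.\<close>
type_synonym 'v ipoly = "('v \<Rightarrow>\<^sub>0 nat) \<Rightarrow>\<^sub>0 int"

definition Var :: "'v \<Rightarrow> 'v ipoly" where
  "Var v = Poly_Mapping.single (Poly_Mapping.single v 1) 1"

definition peval :: "('v \<Rightarrow> 'b::comm_ring_1) \<Rightarrow> 'v ipoly \<Rightarrow> 'b" where
  "peval f P = (\<Sum>\<mu>\<in>Poly_Mapping.keys P.
       of_int (Poly_Mapping.lookup P \<mu>) * (\<Prod>v\<in>Poly_Mapping.keys \<mu>. f v ^ Poly_Mapping.lookup \<mu> v))"

definition gen_ideal :: "'a::comm_ring_1 set \<Rightarrow> 'a set" where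
  "gen_ideal S = {x. \<exists>F c. finite F \<and> F \<subseteq> S \<and> x = (\<Sum>s\<in>F. c s * s)}"

text \<open>A ring R is given by a carrier C and operations add, mul, one.
  HS^m(R) is presented as Z[Var (n,a)] modulo the ideal generated by the relations below.
  Variables Var (n,a) with n > m or a outside the carrier are not generators of HS^m(R);
  they are killed, which gives a ring canonically isomorphic to the quotient of
  Z[d^[n] a | a in R, n <= m] by the defining relations.\<close>
definition hs_rels :: "enat \<Rightarrow> 'a set \<Rightarrow> ('a \<Rightarrow> 'a \<Rightarrow> 'a) \<Rightarrow> ('a \<Rightarrow> 'a \<Rightarrow> 'a) \<Rightarrow> 'a
    \<Rightarrow> (nat \<times> 'a) ipoly set" where
  "hs_rels m C add mul one =
     {Var (n, a) | n a. m < enat n \<or> a \<notin> C}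
   \<union> {Var (n, add a b) - Var (n, a) - Var (n, b) | n a b. enat n \<le> m \<and> a \<in> C \<and> b \<in> C}
   \<union> {Var (n, mul a b) - (\<Sum>i\<le>n. Var (i, a) * Var (n - i, b)) | n a b.
        enat n \<le> m \<and> a \<in> C \<and> b \<in> C}
   \<union> {Var (0, one) - 1}"

definition hs_ideal :: "enat \<Rightarrow> 'a set \<Rightarrow> ('a \<Rightarrow> 'a \<Rightarrow> 'a) \<Rightarrow> ('a \<Rightarrow> 'a \<Rightarrow> 'a) \<Rightarrow> 'a
    \<Rightarrow> (nat \<times> 'a) ipoly set" where
  "hs_ideal m C add mul one = gen_ideal (hs_rels m C add mul one)"

definition HSk_ideal :: "enat \<Rightarrow> (nat \<times> 'k::comm_ring_1) ipoly set" where
  "HSk_ideal m = hs_ideal m UNIV (+) (*) 1"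

text \<open>Elements are coefficient sequences a = (a_i), with a_i = 0 for i > m.\<close>
definition A_carrier :: "enat \<Rightarrow> (nat \<Rightarrow> 'k::comm_ring_1) set" where
  "A_carrier m = {a. \<forall>i. m < enat i \<longrightarrow> a i = 0}"

definition A_add :: "(nat \<Rightarrow> 'k::comm_ring_1) \<Rightarrow> (nat \<Rightarrow> 'k) \<Rightarrow> nat \<Rightarrow> 'k" where
  "A_add a b = (\<lambda>i. a i + b i)"

definition A_mul :: "enat \<Rightarrow> (nat \<Rightarrow> 'k::comm_ring_1) \<Rightarrow> (nat \<Rightarrow> 'k) \<Rightarrow> nat \<Rightarrow> 'k" where
  "A_mul m a b = (\<lambda>i. if enat i \<le> m then (\<Sum>j\<le>i. a j * b (i - j)) else 0)"

definition A_const :: "'k::comm_ring_1 \<Rightarrow> nat \<Rightarrow> 'k" where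
  "A_const c = (\<lambda>i. if i = 0 then c else 0)"

definition A_one :: "nat \<Rightarrow> 'k::comm_ring_1" where
  "A_one = A_const 1"

definition A_pipow :: "enat \<Rightarrow> nat \<Rightarrow> nat \<Rightarrow> 'k::comm_ring_1" where
  "A_pipow m i = (\<lambda>j. if j = i \<and> enat i \<le> m then 1 else 0)"

definition HSA_ideal :: "enat \<Rightarrow> (nat \<times> (nat \<Rightarrow> 'k::comm_ring_1)) ipoly set" where
  "HSA_ideal m = hs_ideal m (A_carrier m) A_add (A_mul m) A_one"

definition iota :: "(nat \<times> 'k::comm_ring_1) ipoly \<Rightarrow> (nat \<times> (nat \<Rightarrow> 'k)) ipoly" where
  "iota = peval (\<lambda>(n, c). Var (n, A_const c))"

text \<open>phibar : HS^m(A) -> HS^m(k), the transpose of phi: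
  d^[n] a |-> coefficient of pi^n in phi(a) = sum_{i<=n} d^[n-i] a_i
  (on the genuine generators; the killed auxiliary variables go to 0).\<close>
definition phibar :: "enat \<Rightarrow> (nat \<times> (nat \<Rightarrow> 'k::comm_ring_1)) ipoly \<Rightarrow> (nat \<times> 'k) ipoly" where
  "phibar m = peval (\<lambda>(n, a). if enat n \<le> m \<and> a \<in> A_carrier m
                               then (\<Sum>i\<le>n. Var (n - i, a i)) else 0)"

definition J_gens :: "enat \<Rightarrow> (nat \<times> (nat \<Rightarrow> 'k::comm_ring_1)) ipoly set" where
  "J_gens m = {Var (n, A_pipow m i) - (if n = i then 1 else 0) | n i. enat n \<le> m}"

definition J_ideal :: "enat \<Rightarrow> (nat \<times> (nat \<Rightarrow> 'k::comm_ring_1)) ipoly set" where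
  "J_ideal m = gen_ideal (J_gens m)"

text \<open>The ideal of Z[...] whose quotient is HS^m(A)/J.\<close>
definition HSA_J_ideal :: "enat \<Rightarrow> (nat \<times> (nat \<Rightarrow> 'k::comm_ring_1)) ipoly set" where
  "HSA_J_ideal m = gen_ideal (hs_rels m (A_carrier m) A_add (A_mul m) A_one \<union> J_gens m)"

end

theory Submission
  imports Defs
begin


definition pmono :: "('v \<Rightarrow> 'b::comm_ring_1) \<Rightarrow> ('v \<Rightarrow>\<^sub>0 nat) \<Rightarrow> 'b" where
  "pmono f \<mu> = (\<Prod>v\<in>Poly_Mapping.keys \<mu>. f v ^ Poly_Mapping.lookup \<mu> v)"

lemma pmono_superset:
  assumes "finite S" "Poly_Mapping.keys \<mu> \<subseteq> S"
  shows "pmono f \<mu> = (\<Prod>v\<in>S. f v ^ Poly_Mapping.lookup \<mu> v)"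
  unfolding pmono_def
  by (rule prod.mono_neutral_left) (use assms in \<open>auto simp: in_keys_iff\<close>)

lemma pmono_add: "pmono f (\<mu> + \<nu>) = pmono f \<mu> * pmono f \<nu>"
proof -
  let ?S = "Poly_Mapping.keys \<mu> \<union> Poly_Mapping.keys \<nu>"
  have "pmono f (\<mu> + \<nu>) = (\<Prod>v\<in>?S. f v ^ Poly_Mapping.lookup (\<mu> + \<nu>) v)"
    by (rule pmono_superset) (use keys_add[of \<mu> \<nu>] in auto)
  also have "\<dots> = (\<Prod>v\<in>?S. f v ^ Poly_Mapping.lookup \<mu> v) * (\<Prod>v\<in>?S. f v ^ Poly_Mapping.lookup \<nu> v)"
    by (simp add: lookup_add power_add prod.distrib)
  also have "\<dots> = pmono f \<mu> * pmono f \<nu>"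
    by (subst (1 2) pmono_superset[of ?S]) auto
  finally show ?thesis .
qed

lemma pmono_zero [simp]: "pmono f 0 = 1"
  by (simp add: pmono_def)

lemma pmono_single [simp]: "pmono f (Poly_Mapping.single v k) = f v ^ k"
  by (simp add: pmono_def)

lemma peval_alt: "peval f P = (\<Sum>\<mu>\<in>Poly_Mapping.keys P. of_int (Poly_Mapping.lookup P \<mu>) * pmono f \<mu>)"
  by (simp add: peval_def pmono_def)

lemma peval_superset:
  assumes "finite S" "Poly_Mapping.keys P \<subseteq> S"
  shows "peval f P = (\<Sum>\<mu>\<in>S. of_int (Poly_Mapping.lookup P \<mu>) * pmono f \<mu>)"
  unfolding peval_alt
  by (rule sum.mono_neutral_left) (use assms in \<open>auto simp: in_keys_iff\<close>)

lemma peval_add: "peval f (P + Q) = peval f P + peval f Q"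
proof -
  let ?S = "Poly_Mapping.keys P \<union> Poly_Mapping.keys Q"
  have "peval f (P + Q) = (\<Sum>\<mu>\<in>?S. of_int (Poly_Mapping.lookup (P + Q) \<mu>) * pmono f \<mu>)"
    by (rule peval_superset) (use keys_add[of P Q] in auto)
  also have "\<dots> = (\<Sum>\<mu>\<in>?S. of_int (Poly_Mapping.lookup P \<mu>) * pmono f \<mu>) + (\<Sum>\<mu>\<in>?S. of_int (Poly_Mapping.lookup Q \<mu>) * pmono f \<mu>)"
    by (simp add: lookup_add distrib_right sum.distrib)
  also have "\<dots> = peval f P + peval f Q"
    by (subst (1 2) peval_superset[of ?S]) auto
  finally show ?thesis .
qed

lemma peval_zero [simp]: "peval f 0 = 0"
  by (simp add: peval_def)

lemma peval_uminus: "peval f (- P) = - peval f P"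
  by (simp add: peval_alt sum_negf)

lemma peval_diff: "peval f (P - Q) = peval f P - peval f Q"
proof -
  have "peval f (P + - Q) = peval f P + - peval f Q" by (simp only: peval_add peval_uminus)
  then show ?thesis by (simp only: diff_conv_add_uminus)
qed

lemma peval_sum: "peval f (\<Sum>i\<in>I. g i) = (\<Sum>i\<in>I. peval f (g i))"
  by (induction I rule: infinite_finite_induct) (auto simp: peval_add)

lemma peval_single: "peval f (Poly_Mapping.single \<mu> c) = of_int c * pmono f \<mu>"
  by (subst peval_superset[of "{\<mu>}"]) auto

lemma poly_expansion: "P = (\<Sum>\<mu>\<in>Poly_Mapping.keys P. Poly_Mapping.single \<mu> (Poly_Mapping.lookup P \<mu>))"
proof (rule poly_mapping_eqI)
  fix \<nu>
  have "Poly_Mapping.lookup (\<Sum>\<mu>\<in>Poly_Mapping.keys P. Poly_Mapping.single \<mu> (Poly_Mapping.lookup P \<mu>)) \<nu>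
     = (\<Sum>\<mu>\<in>Poly_Mapping.keys P. if \<mu> = \<nu> then Poly_Mapping.lookup P \<mu> else 0)"
    by (simp add: lookup_sum lookup_single when_def)
  also have "\<dots> = Poly_Mapping.lookup P \<nu>"
    by (auto simp: in_keys_iff)
  finally show "Poly_Mapping.lookup P \<nu> = Poly_Mapping.lookup (\<Sum>\<mu>\<in>Poly_Mapping.keys P. Poly_Mapping.single \<mu> (Poly_Mapping.lookup P \<mu>)) \<nu>" by simp
qed

lemma peval_mult: "peval f (P * Q) = peval f P * peval f Q"
proof -
  have "P * Q = (\<Sum>\<mu>\<in>Poly_Mapping.keys P. Poly_Mapping.single \<mu> (Poly_Mapping.lookup P \<mu>))
          * (\<Sum>\<nu>\<in>Poly_Mapping.keys Q. Poly_Mapping.single \<nu> (Poly_Mapping.lookup Q \<nu>))"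
    by (subst (1) poly_expansion[of P], subst (1) poly_expansion[of Q]) (rule refl)
  also have "\<dots> = (\<Sum>\<mu>\<in>Poly_Mapping.keys P. \<Sum>\<nu>\<in>Poly_Mapping.keys Q.
      Poly_Mapping.single (\<mu> + \<nu>) (Poly_Mapping.lookup P \<mu> * Poly_Mapping.lookup Q \<nu>))"
    by (simp add: sum_product mult_single)
  finally have "peval f (P * Q) = (\<Sum>\<mu>\<in>Poly_Mapping.keys P. \<Sum>\<nu>\<in>Poly_Mapping.keys Q.
      (of_int (Poly_Mapping.lookup P \<mu>) * pmono f \<mu>) * (of_int (Poly_Mapping.lookup Q \<nu>) * pmono f \<nu>))"
    by (simp add: peval_sum peval_single pmono_add mult_ac)
  also have "\<dots> = peval f P * peval f Q"
    by (simp add: peval_alt sum_product)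
  finally show ?thesis .
qed

lemma peval_one [simp]: "peval f 1 = 1"
  using peval_single[of f 0 1] by simp

lemma peval_Var [simp]: "peval f (Var v) = f v"
  by (simp add: Var_def peval_single)

lemma peval_of_int [simp]: "peval f (of_int c) = of_int c"
  using peval_single[of f 0 c] by (simp del: single_of_int add: single_of_int[symmetric])

lemma peval_prod: "peval f (\<Prod>i\<in>I. g i) = (\<Prod>i\<in>I. peval f (g i))"
  by (induction I rule: infinite_finite_induct) (auto simp: peval_mult)

lemma peval_power: "peval f (x ^ n) = peval f x ^ n"
  by (induction n) (auto simp: peval_mult)

lemma peval_compose: "peval g (peval f P) = peval (\<lambda>v. peval g (f v)) P"
proof -
  have "peval g (peval f P) = (\<Sum>\<mu>\<in>Poly_Mapping.keys P. of_int (Poly_Mapping.lookup P \<mu>) * pmono (\<lambda>v. peval g (f v)) \<mu>)"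
    by (simp only: peval_alt[of f P]) (simp add: peval_sum peval_mult pmono_def peval_prod peval_power)
  then show ?thesis by (simp add: peval_alt)
qed

lemma Var_power: "Var a ^ b = Poly_Mapping.single (Poly_Mapping.single a b) 1"
proof (induction b)
  case 0 then show ?case by simp
next
  case (Suc b)
  then show ?case
    by (simp add: Var_def mult_single single_add[symmetric])
qed

lemma pmono_Var: "pmono Var \<mu> = Poly_Mapping.single \<mu> 1"
proof (induction \<mu> rule: update_induct)
  case const then show ?case by simp
next
  case (update f a b)
  have eq: "Poly_Mapping.update a b f = f + Poly_Mapping.single a b"
    using update.hyps(1)
    by (intro poly_mapping_eqI) (auto simp: lookup_update lookup_add lookup_single when_def in_keys_iff)
  show ?case
    by (simp add: eq pmono_add update.IH Var_power mult_single)
qed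

lemma peval_Var_id: "peval Var P = P"
proof -
  have "of_int c * Poly_Mapping.single \<mu> 1 = Poly_Mapping.single \<mu> c" for c and \<mu> :: "'a \<Rightarrow>\<^sub>0 nat"
    by (simp del: single_of_int add: single_of_int[symmetric] mult_single)
  then show ?thesis
    by (subst (2) poly_expansion) (simp add: peval_alt pmono_Var)
qed



lemma gi_intro:
  assumes "finite F" "F \<subseteq> S" "x = (\<Sum>s\<in>F. c s * s)"
  shows "x \<in> gen_ideal S"
  unfolding gen_ideal_def using assms by (intro CollectI exI[of _ F] exI[of _ c]) simp

lemma gi_zero [simp]: "0 \<in> gen_ideal S"
  unfolding gen_ideal_def by (rule CollectI, rule exI[of _ "{}"]) auto

lemma gi_gen: "s \<in> S \<Longrightarrow> s \<in> gen_ideal S"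
  unfolding gen_ideal_def by (rule CollectI, rule exI[of _ "{s}"], rule exI[of _ "\<lambda>_. 1"]) auto

lemma gi_add:
  assumes "x \<in> gen_ideal S" "y \<in> gen_ideal S"
  shows "x + y \<in> gen_ideal S"
proof -
  from assms obtain F c G d where F: "finite F" "F \<subseteq> S" "x = (\<Sum>s\<in>F. c s * s)"
    and G: "finite G" "G \<subseteq> S" "y = (\<Sum>s\<in>G. d s * s)"
    unfolding gen_ideal_def by blast
  define e where "e s = (if s \<in> F then c s else 0) + (if s \<in> G then d s else 0)" for s
  have 1: "(\<Sum>s\<in>F \<union> G. (if s \<in> F then c s else 0) * s) = x"
    using F G by (simp add: if_distrib[of "\<lambda>t. t * _"] sum.If_cases Int_absorb1)
  have 2: "(\<Sum>s\<in>F \<union> G. (if s \<in> G then d s else 0) * s) = y"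
    using F G by (simp add: if_distrib[of "\<lambda>t. t * _"] sum.If_cases Int_absorb1)
  have "x + y = (\<Sum>s\<in>F \<union> G. e s * s)"
    unfolding e_def distrib_right sum.distrib 1 2 ..
  then show ?thesis
    using F G by (intro gi_intro[of "F \<union> G" S _ e]) auto
qed

lemma gi_mult:
  assumes "x \<in> gen_ideal S"
  shows "r * x \<in> gen_ideal S"
proof -
  from assms obtain F c where F: "finite F" "F \<subseteq> S" "x = (\<Sum>s\<in>F. c s * s)"
    unfolding gen_ideal_def by blast
  have "r * x = (\<Sum>s\<in>F. (r * c s) * s)"
    unfolding F(3) sum_distrib_left by (simp only: mult.assoc)
  then show ?thesis
    using F by (intro gi_intro[of F S _ "\<lambda>s. r * c s"]) auto
qed

lemma gi_mult_right: "x \<in> gen_ideal S \<Longrightarrow> x * r \<in> gen_ideal S"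
  using gi_mult[of x S r] by (simp add: mult.commute)

lemma gi_uminus: "x \<in> gen_ideal S \<Longrightarrow> - x \<in> gen_ideal S"
  using gi_mult[of x S "-1"] by simp

lemma gi_diff: "x \<in> gen_ideal S \<Longrightarrow> y \<in> gen_ideal S \<Longrightarrow> x - y \<in> gen_ideal S"
  using gi_add[of x S "-y"] gi_uminus[of y S] by simp

lemma gi_sum: "(\<And>i. i \<in> I \<Longrightarrow> g i \<in> gen_ideal S) \<Longrightarrow> (\<Sum>i\<in>I. g i) \<in> gen_ideal S"
  by (induction I rule: infinite_finite_induct) (auto intro: gi_add)

lemma gi_mono:
  assumes "T \<subseteq> gen_ideal S" "x \<in> gen_ideal T"
  shows "x \<in> gen_ideal S"
proof -
  from assms(2) obtain F c where F: "finite F" "F \<subseteq> T" "x = (\<Sum>s\<in>F. c s * s)"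
    unfolding gen_ideal_def by blast
  show ?thesis unfolding F(3) using F(2) assms(1) by (intro gi_sum gi_mult) auto
qed

lemma gi_hom:
  assumes "\<And>s. s \<in> S \<Longrightarrow> peval g s \<in> gen_ideal T" "x \<in> gen_ideal S"
  shows "peval g x \<in> gen_ideal T"
proof -
  from assms(2) obtain F c where F: "finite F" "F \<subseteq> S" "x = (\<Sum>s\<in>F. c s * s)"
    unfolding gen_ideal_def by blast
  show ?thesis unfolding F(3) peval_sum peval_mult using F(2) assms(1) by (intro gi_sum gi_mult) auto
qed

lemma cg_refl: "a - a \<in> gen_ideal S" by simp

lemma cg_sym: "a - b \<in> gen_ideal S \<Longrightarrow> b - a \<in> gen_ideal S"
  using gi_uminus[of "a - b" S] by simp

lemma cg_trans: "a - b \<in> gen_ideal S \<Longrightarrow> b - c \<in> gen_ideal S \<Longrightarrow> a - c \<in> gen_ideal S"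
  using gi_add[of "a - b" S "b - c"] by simp

lemma cg_add: "a - b \<in> gen_ideal S \<Longrightarrow> c - d \<in> gen_ideal S \<Longrightarrow> (a + c) - (b + d) \<in> gen_ideal S"
  using gi_add[of "a - b" S "c - d"] by (simp add: algebra_simps)

lemma cg_diff: "a - b \<in> gen_ideal S \<Longrightarrow> c - d \<in> gen_ideal S \<Longrightarrow> (a - c) - (b - d) \<in> gen_ideal S"
  using gi_diff[of "a - b" S "c - d"] by (simp add: algebra_simps)

lemma cg_mult: "a - b \<in> gen_ideal S \<Longrightarrow> c - d \<in> gen_ideal S \<Longrightarrow> (a * c) - (b * d) \<in> gen_ideal S"
proof -
  assume "a - b \<in> gen_ideal S" "c - d \<in> gen_ideal S"
  then have "a * (c - d) + (a - b) * d \<in> gen_ideal S"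
    by (intro gi_add gi_mult gi_mult_right)
  then show ?thesis by (simp add: algebra_simps)
qed

lemma cg_sum: "(\<And>i. i \<in> I \<Longrightarrow> f i - g i \<in> gen_ideal S) \<Longrightarrow> (\<Sum>i\<in>I. f i) - (\<Sum>i\<in>I. g i) \<in> gen_ideal S"
  by (induction I rule: infinite_finite_induct) (auto intro: cg_add)

lemma cg_prod: "(\<And>i. i \<in> I \<Longrightarrow> f i - g i \<in> gen_ideal S) \<Longrightarrow> (\<Prod>i\<in>I. f i) - (\<Prod>i\<in>I. g i) \<in> gen_ideal S"
  by (induction I rule: infinite_finite_induct) (auto intro: cg_mult)

lemma cg_power: "a - b \<in> gen_ideal S \<Longrightarrow> a ^ n - b ^ n \<in> gen_ideal S"
  by (induction n) (auto intro: cg_mult)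

lemma gi_cg: "a - b \<in> gen_ideal S \<Longrightarrow> b \<in> gen_ideal S \<Longrightarrow> a \<in> gen_ideal S"
  using gi_add[of "a - b" S b] by simp

lemma peval_cong:
  assumes "\<And>v. f v - g v \<in> gen_ideal S"
  shows "peval f P - peval g P \<in> gen_ideal S"
  unfolding peval_alt pmono_def using assms
  by (intro cg_sum cg_mult cg_refl cg_prod cg_power)



lemma hk_gen: "x \<in> hs_rels m UNIV (+) (*) 1 \<Longrightarrow> x \<in> HSk_ideal m"
  unfolding HSk_ideal_def hs_ideal_def by (rule gi_gen)

lemma hk_big: "m < enat n \<Longrightarrow> Var (n, c :: 'k::comm_ring_1) \<in> HSk_ideal m"
  by (rule hk_gen) (auto simp: hs_rels_def)

lemma hk_add: "Var (n, a + b :: 'k::comm_ring_1) - (Var (n, a) + Var (n, b)) \<in> HSk_ideal m"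
proof (cases "enat n \<le> m")
  case True
  then have "Var (n, a + b) - Var (n, a) - Var (n, b) \<in> HSk_ideal m"
    by (intro hk_gen) (unfold hs_rels_def, blast)
  then show ?thesis by (simp add: algebra_simps)
next
  case False
  then have "m < enat n" by auto
  then show ?thesis
    unfolding HSk_ideal_def hs_ideal_def
    by (intro gi_diff gi_add) (auto intro!: gi_gen simp: hs_rels_def)
qed

lemma hk_zero: "Var (n, 0 :: 'k::comm_ring_1) \<in> HSk_ideal m"
  using hk_add[of n "0::'k" 0 m] gi_uminus[of "Var (n, 0::'k) - (Var (n, 0) + Var (n, 0))"]
  unfolding HSk_ideal_def hs_ideal_def by simp

lemma hk_sum: "Var (n, \<Sum>j\<in>F. x j :: 'k::comm_ring_1) - (\<Sum>j\<in>F. Var (n, x j)) \<in> HSk_ideal m"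
proof (induction F rule: infinite_finite_induct)
  case (infinite A) then show ?case using hk_zero by simp
next
  case empty then show ?case using hk_zero by simp
next
  case (insert j F)
  have "Var (n, x j + (\<Sum>j\<in>F. x j)) - (Var (n, x j) + Var (n, \<Sum>j\<in>F. x j)) \<in> HSk_ideal m"
    by (rule hk_add)
  moreover have "(Var (n, x j) + Var (n, \<Sum>j\<in>F. x j)) - (Var (n, x j) + (\<Sum>j\<in>F. Var (n, x j))) \<in> HSk_ideal m"
    using insert.IH unfolding HSk_ideal_def hs_ideal_def by (intro cg_add cg_refl)
  ultimately show ?case using insert.hyps unfolding HSk_ideal_def hs_ideal_def
    by (simp add: cg_trans)
qed

lemma hk_mul: "enat n \<le> m \<Longrightarrow>
   Var (n, a * b :: 'k::comm_ring_1) - (\<Sum>i\<le>n. Var (i, a) * Var (n - i, b)) \<in> HSk_ideal m"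
  by (intro hk_gen) (unfold hs_rels_def, blast)

lemma hk_one0: "Var (0, 1 :: 'k::comm_ring_1) - 1 \<in> HSk_ideal m"
  by (intro hk_gen) (unfold hs_rels_def, blast)

lemma hk_one: "0 < l \<Longrightarrow> Var (l, 1 :: 'k::comm_ring_1) \<in> HSk_ideal m"
proof (induction l rule: less_induct)
  case (less l)
  show ?case
  proof (cases "enat l \<le> m")
    case False then show ?thesis by (intro hk_big) auto
  next
    case True
    define V where "V = Var (l, 1 :: 'k)"
    have A: "V - (\<Sum>i\<le>l. Var (i, 1::'k) * Var (l - i, 1)) \<in> HSk_ideal m"
      using hk_mul[OF True, of 1 1] by (simp add: V_def)
    have B: "(\<Sum>i\<le>l. Var (i, 1::'k) * Var (l - i, 1)) - (\<Sum>i\<le>l. (if i = 0 then V else 0) + (if i = l then V else 0)) \<in> HSk_ideal m"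
      unfolding HSk_ideal_def hs_ideal_def
    proof (rule cg_sum)
      fix i assume i: "i \<in> {..l}"
      consider "i = 0" | "i = l" | "0 < i" "i < l" using i less.prems by fastforce
      then show "Var (i, 1::'k) * Var (l - i, 1) - ((if i = 0 then V else 0) + (if i = l then V else 0))
          \<in> gen_ideal (hs_rels m UNIV (+) (*) 1)"
      proof cases
        case 1
        then have "Var (i, 1::'k) * Var (l - i, 1) - 1 * V \<in> gen_ideal (hs_rels m UNIV (+) (*) 1)"
          using hk_one0[of m] unfolding HSk_ideal_def hs_ideal_def V_def by (intro cg_mult) auto
        then show ?thesis using 1 less.prems by simp
      next
        case 2
        then have "Var (i, 1::'k) * Var (l - i, 1) - V * 1 \<in> gen_ideal (hs_rels m UNIV (+) (*) 1)"
          using hk_one0[of m] unfolding HSk_ideal_def hs_ideal_def V_def by (intro cg_mult) auto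
        then show ?thesis using 2 less.prems by simp
      next
        case 3
        then have "Var (i, 1::'k) \<in> HSk_ideal m" using less.IH by blast
        then show ?thesis using 3 unfolding HSk_ideal_def hs_ideal_def by (simp add: gi_mult_right)
      qed
    qed
    have C: "(\<Sum>i\<le>l. (if i = 0 then V else 0) + (if i = l then V else 0)) = V + V"
      by (simp add: sum.distrib)
    have "V - (V + V) \<in> HSk_ideal m"
      using A B unfolding C HSk_ideal_def hs_ideal_def by (rule cg_trans)
    then have "- (V - (V + V)) \<in> HSk_ideal m"
      unfolding HSk_ideal_def hs_ideal_def by (rule gi_uminus)
    then show ?thesis by (simp add: V_def)
  qed
qed



lemma A_const_carrier: "A_const c \<in> A_carrier m"
  by (auto simp: A_const_def A_carrier_def zero_enat_def[symmetric])

lemma A_const_add: "A_const (a + b) = A_add (A_const a) (A_const b)"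
  by (auto simp: A_const_def A_add_def)

lemma A_const_mul: "A_const (a * b) = A_mul m (A_const a) (A_const b :: nat \<Rightarrow> 'k::comm_ring_1)"
proof
  fix i
  show "A_const (a * b) i = A_mul m (A_const a) (A_const b) i"
  proof (cases "i = 0")
    case True
    then show ?thesis by (simp add: A_const_def A_mul_def zero_enat_def[symmetric])
  next
    case False
    have "(\<Sum>j\<le>i. A_const a j * A_const b (i - j)) = 0"
      by (rule sum.neutral) (use False in \<open>auto simp: A_const_def\<close>)
    then show ?thesis using False by (simp add: A_mul_def A_const_def)
  qed
qed

lemma A_add_carrier: "a \<in> A_carrier m \<Longrightarrow> b \<in> A_carrier m \<Longrightarrow> A_add a b \<in> A_carrier m"
  by (auto simp: A_carrier_def A_add_def)

lemma A_mul_carrier: "A_mul m a b \<in> A_carrier m"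
  by (auto simp: A_carrier_def A_mul_def)

lemma A_one_carrier: "A_one \<in> A_carrier m"
  by (simp add: A_one_def A_const_carrier)

lemma A_pipow_carrier: "A_pipow m i \<in> A_carrier m"
  by (auto simp: A_carrier_def A_pipow_def)

lemma iota_gen:
  assumes "s \<in> hs_rels m UNIV (+) (*) (1::'k::comm_ring_1)"
  shows "iota s \<in> HSA_ideal m"
proof -
  have iV: "iota (Var (n, c)) = Var (n, A_const c)" for n and c :: 'k
    by (simp add: iota_def)
  from assms consider (big) n a where "s = Var (n, a)" "m < enat n"
    | (add) n a b where "s = Var (n, a + b) - Var (n, a) - Var (n, b)" "enat n \<le> m"
    | (mul) n a b where "s = Var (n, a * b) - (\<Sum>i\<le>n. Var (i, a) * Var (n - i, b))" "enat n \<le> m"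
    | (one) "s = Var (0, 1) - 1"
    unfolding hs_rels_def by blast
  then have "iota s \<in> hs_rels m (A_carrier m) A_add (A_mul m) A_one"
  proof cases
    case big
    then have "iota s = Var (n, A_const a)" by (simp add: iV)
    then show ?thesis using big unfolding hs_rels_def by blast
  next
    case add
    then have "iota s = Var (n, A_add (A_const a) (A_const b)) - Var (n, A_const a) - Var (n, A_const b)"
      by (simp add: iota_def peval_diff A_const_add)
    then show ?thesis using add A_const_carrier unfolding hs_rels_def by blast
  next
    case mul
    then have "iota s = Var (n, A_mul m (A_const a) (A_const b)) - (\<Sum>i\<le>n. Var (i, A_const a) * Var (n - i, A_const b))"
      by (simp add: iota_def peval_diff peval_sum peval_mult A_const_mul[of _ _ m])
    then show ?thesis using mul A_const_carrier unfolding hs_rels_def by blast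
  next
    case one
    then have "iota s = Var (0, A_one) - 1"
      by (simp add: iota_def peval_diff A_one_def)
    then show ?thesis unfolding hs_rels_def by blast
  qed
  then show ?thesis unfolding HSA_ideal_def hs_ideal_def by (rule gi_gen)
qed

lemma claim1: "iota ` (HSk_ideal m :: (nat \<times> 'k::comm_ring_1) ipoly set) \<subseteq> HSA_ideal m"
proof
  fix y assume "y \<in> iota ` (HSk_ideal m :: (nat \<times> 'k) ipoly set)"
  then obtain x where x: "x \<in> HSk_ideal m" "y = iota x" by blast
  show "y \<in> HSA_ideal m"
    unfolding x(2) iota_def HSA_ideal_def hs_ideal_def
    by (rule gi_hom[OF _ x(1)[unfolded HSk_ideal_def hs_ideal_def]])
       (use iota_gen in \<open>auto simp: iota_def HSA_ideal_def hs_ideal_def\<close>)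
qed


lemma triple_sum:
  "(\<Sum>i\<le>(n::nat). \<Sum>j\<le>i. \<Sum>s\<le>n-i. f i j s) =
   (\<Sum>(i,j,s)\<in>{(i,j,s). i \<le> n \<and> j \<le> i \<and> s \<le> n - i}. (f i j s :: 'a::comm_monoid_add))"
proof -
  have "(\<Sum>i\<le>n. \<Sum>j\<le>i. \<Sum>s\<le>n-i. f i j s) = (\<Sum>i\<le>n. \<Sum>(j,s)\<in>{..i} \<times> {..n-i}. f i j s)"
    by (simp add: sum.cartesian_product)
  also have "\<dots> = (\<Sum>(i,js)\<in>Sigma {..n} (\<lambda>i. {..i} \<times> {..n-i}). f i (fst js) (snd js))"
    by (subst sum.Sigma) (auto simp: split_def)
  also have "\<dots> = (\<Sum>(i,j,s)\<in>{(i,j,s). i \<le> n \<and> j \<le> i \<and> s \<le> n - i}. f i j s)"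
    by (rule sum.cong) (auto simp: split_def)
  finally show ?thesis .
qed

lemma quad_identity:
  "(\<Sum>i\<le>(n::nat). \<Sum>j\<le>i. \<Sum>s\<le>n-i. G s j (n - i - s) (i - j)) =
   (\<Sum>i\<le>n. \<Sum>j\<le>i. \<Sum>t\<le>n-i. (G (i - j) j (n - i - t) t :: 'a::comm_monoid_add))"
  unfolding triple_sum
  apply (rule sum.reindex_bij_witness[where i = "\<lambda>(i,j,t). (t + j, j, i - j)" and j = "\<lambda>(i,j,s). (s + j, j, i - j)"])
  apply (auto simp: add.commute)
  done


lemma phibar_Var: "phibar m (Var (n, a)) =
   (if enat n \<le> m \<and> a \<in> A_carrier m then (\<Sum>i\<le>n. Var (n - i, a i)) else 0)"
  by (simp add: phibar_def)

lemma phibar_Var_in: "enat n \<le> m \<Longrightarrow> a \<in> A_carrier m \<Longrightarrow>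
   phibar m (Var (n, a)) = (\<Sum>i\<le>n. Var (n - i, a i))"
  by (simp add: phibar_Var)

lemma phibar_diff: "phibar m (x - y) = phibar m x - phibar m y"
  by (simp add: phibar_def peval_diff)
lemma phibar_sum: "phibar m (\<Sum>i\<in>I. g i) = (\<Sum>i\<in>I. phibar m (g i))"
  by (simp add: phibar_def peval_sum)
lemma phibar_mult: "phibar m (x * y) = phibar m x * phibar m y"
  by (simp add: phibar_def peval_mult)
lemma phibar_one [simp]: "phibar m 1 = 1"
  by (simp add: phibar_def)
lemma phibar_zero [simp]: "phibar m 0 = 0"
  by (simp add: phibar_def)

lemma phibar_mul_case:
  fixes a b :: "nat \<Rightarrow> 'k::comm_ring_1"
  assumes n: "enat n \<le> m" and a: "a \<in> A_carrier m" and b: "b \<in> A_carrier m"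
  shows "phibar m (Var (n, A_mul m a b) - (\<Sum>i\<le>n. Var (i, a) * Var (n - i, b))) \<in> HSk_ideal m"
proof -
  let ?I = "gen_ideal (hs_rels m UNIV (+) (*) (1::'k))"
  define G where "G s j t j' = Var (s, a j) * Var (t, b j')" for s j t j' :: nat
  have le: "enat i \<le> m" if "i \<le> n" for i using n that by (meson enat_ord_simps(1) order_trans)
  have "phibar m (Var (n, A_mul m a b)) = (\<Sum>i\<le>n. Var (n - i, A_mul m a b i))"
    by (rule phibar_Var_in[OF n A_mul_carrier])
  also have "\<dots> = (\<Sum>i\<le>n. Var (n - i, \<Sum>j\<le>i. a j * b (i - j)))"
    by (intro sum.cong) (auto simp: A_mul_def le)
  finally have L: "phibar m (Var (n, A_mul m a b)) = (\<Sum>i\<le>n. Var (n - i, \<Sum>j\<le>i. a j * b (i - j)))" .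
  have R: "phibar m (\<Sum>i\<le>n. Var (i, a) * Var (n - i, b)) =
      (\<Sum>i\<le>n. \<Sum>j\<le>i. \<Sum>t\<le>n-i. G (i - j) j (n - i - t) t)"
    using le a b by (simp add: phibar_sum phibar_mult phibar_Var sum_product G_def)
  have S: "(\<Sum>i\<le>n. Var (n - i, \<Sum>j\<le>i. a j * b (i - j))) -
      (\<Sum>i\<le>n. \<Sum>j\<le>i. \<Sum>s\<le>n-i. G s j (n - i - s) (i - j)) \<in> ?I"
  proof (rule cg_sum)
    fix i assume i: "i \<in> {..n}"
    have "Var (n - i, \<Sum>j\<le>i. a j * b (i - j)) - (\<Sum>j\<le>i. Var (n - i, a j * b (i - j))) \<in> ?I"
      using hk_sum unfolding HSk_ideal_def hs_ideal_def by blast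
    moreover have "(\<Sum>j\<le>i. Var (n - i, a j * b (i - j))) - (\<Sum>j\<le>i. \<Sum>s\<le>n-i. G s j (n - i - s) (i - j)) \<in> ?I"
    proof (rule cg_sum)
      fix j
      have "enat (n - i) \<le> m" using le[of "n - i"] by simp
      from hk_mul[OF this, of "a j" "b (i - j)"]
      show "Var (n - i, a j * b (i - j)) - (\<Sum>s\<le>n-i. G s j (n - i - s) (i - j)) \<in> ?I"
        unfolding HSk_ideal_def hs_ideal_def G_def by (simp add: diff_diff_left)
    qed
    ultimately show "Var (n - i, \<Sum>j\<le>i. a j * b (i - j)) - (\<Sum>j\<le>i. \<Sum>s\<le>n-i. G s j (n - i - s) (i - j)) \<in> ?I"
      by (rule cg_trans)
  qed
  show ?thesis
    unfolding phibar_diff L R HSk_ideal_def hs_ideal_def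
    using S unfolding quad_identity .
qed

lemma phibar_rel:
  assumes "s \<in> hs_rels m (A_carrier m) A_add (A_mul m) (A_one :: nat \<Rightarrow> 'k::comm_ring_1)"
  shows "phibar m s \<in> HSk_ideal m"
  using assms unfolding hs_rels_def
proof (elim UnE CollectE exE conjE)
  fix n a assume "s = Var (n, a)" "m < enat n \<or> a \<notin> A_carrier m"
  then show ?thesis by (auto simp: phibar_Var HSk_ideal_def hs_ideal_def)
next
  fix n a b assume s: "s = Var (n, A_add a b) - Var (n, a) - Var (n, b)" and n: "enat n \<le> m"
    and a: "a \<in> A_carrier m" and b: "b \<in> A_carrier m"
  have "phibar m s = (\<Sum>i\<le>n. Var (n - i, a i + b i)) - (\<Sum>i\<le>n. Var (n - i, a i) + Var (n - i, b i))"
    using n a b A_add_carrier[OF a b]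
    by (simp add: s phibar_diff phibar_Var A_add_def sum.distrib)
  also have "\<dots> \<in> HSk_ideal m"
    unfolding HSk_ideal_def hs_ideal_def
    by (rule cg_sum) (use hk_add in \<open>auto simp: HSk_ideal_def hs_ideal_def\<close>)
  finally show ?thesis .
next
  fix n a b assume "s = Var (n, A_mul m a b) - (\<Sum>i\<le>n. Var (i, a) * Var (n - i, b))" "enat n \<le> m"
    "a \<in> A_carrier m" "b \<in> A_carrier m"
  then show ?thesis using phibar_mul_case by blast
next
  assume "s \<in> {Var (0, A_one) - 1}"
  moreover have "phibar m (Var (0, A_one)) = Var (0, A_one 0 :: 'k)"
    using phibar_Var_in[of 0 m A_one] A_one_carrier[of m] by (simp add: zero_enat_def[symmetric])
  ultimately have "phibar m s = Var (0, A_one 0) - 1"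
    by (simp add: phibar_diff)
  then have "phibar m s = Var (0, 1::'k) - 1"
    by (simp add: A_one_def A_const_def)
  then show ?thesis using hk_one0 by simp
qed



lemma phibar_J:
  assumes "s \<in> (J_gens m :: (nat \<times> (nat \<Rightarrow> 'k::comm_ring_1)) ipoly set)"
  shows "phibar m s \<in> HSk_ideal m"
proof -
  let ?I = "gen_ideal (hs_rels m UNIV (+) (*) (1::'k))"
  from assms obtain n i where s: "s = Var (n, A_pipow m i) - (if n = i then 1 else 0)" and n: "enat n \<le> m"
    unfolding J_gens_def by blast
  have ps: "phibar m s = (\<Sum>j\<le>n. Var (n - j, A_pipow m i j :: 'k)) - (if n = i then 1 else 0)"
    by (simp add: s phibar_diff phibar_Var_in[OF n A_pipow_carrier])
  have "(\<Sum>j\<le>n. Var (n - j, A_pipow m i j :: 'k)) - (\<Sum>j\<le>n. if j = i then Var (n - j, 1::'k) else 0) \<in> ?I"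
  proof (rule cg_sum)
    fix j assume j: "j \<in> {..n}"
    show "Var (n - j, A_pipow m i j :: 'k) - (if j = i then Var (n - j, 1::'k) else 0) \<in> ?I"
    proof (cases "j = i")
      case True
      then have "enat i \<le> m" using j n by (meson atMost_iff enat_ord_simps(1) order_trans)
      then show ?thesis using True by (simp add: A_pipow_def)
    next
      case False
      then show ?thesis using hk_zero[of "n - j" m] by (simp add: A_pipow_def HSk_ideal_def hs_ideal_def)
    qed
  qed
  moreover have "(\<Sum>j\<le>n. if j = i then Var (n - j, 1::'k) else 0) - (if n = i then 1 else 0) \<in> ?I"
  proof (cases "i \<le> n")
    case True
    then have eq: "(\<Sum>j\<le>n. if j = i then Var (n - j, 1::'k) else 0) = Var (n - i, 1)"
      by (simp add: sum.delta)
    show ?thesis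
    proof (cases "n = i")
      case True then show ?thesis using hk_one0 by (simp add: eq HSk_ideal_def hs_ideal_def)
    next
      case False
      then have "Var (n - i, 1::'k) \<in> ?I" using hk_one[of "n - i" m] \<open>i \<le> n\<close>
        by (simp add: HSk_ideal_def hs_ideal_def)
      then show ?thesis using False by (simp add: eq)
    qed
  next
    case False
    then show ?thesis by (simp add: sum.delta)
  qed
  ultimately show ?thesis unfolding ps HSk_ideal_def hs_ideal_def by (rule cg_trans)
qed

lemma claim3: "phibar m (iota P) - (P :: (nat \<times> 'k::comm_ring_1) ipoly) \<in> HSk_ideal m"
proof -
  let ?I = "gen_ideal (hs_rels m UNIV (+) (*) (1::'k))"
  have "peval (\<lambda>v. phibar m (case v of (n, c) \<Rightarrow> Var (n, A_const c))) P - peval Var P \<in> ?I"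
  proof (rule peval_cong)
    fix v :: "nat \<times> 'k"
    obtain n c where v: "v = (n, c)" by (cases v)
    show "phibar m (case v of (n, c) \<Rightarrow> Var (n, A_const c)) - Var v \<in> ?I"
    proof (cases "enat n \<le> m")
      case True
      have "(\<Sum>i\<le>n. Var (n - i, A_const c i)) - (\<Sum>i\<le>n. if i = 0 then Var (n, c) else 0) \<in> ?I"
        by (rule cg_sum) (use hk_zero in \<open>auto simp: A_const_def HSk_ideal_def hs_ideal_def\<close>)
      then show ?thesis using True A_const_carrier[of c m] by (simp add: v phibar_Var)
    next
      case False
      then show ?thesis using hk_big[of m n c]
        by (auto simp: v phibar_Var HSk_ideal_def hs_ideal_def intro: gi_uminus)
    qed
  qed
  moreover have "phibar m (iota P) = peval (\<lambda>v. phibar m (case v of (n, c) \<Rightarrow> Var (n, A_const c))) P"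
    by (simp add: iota_def phibar_def peval_compose)
  ultimately show ?thesis
    by (simp add: peval_Var_id HSk_ideal_def hs_ideal_def)
qed

theorem proposition6p5:
  fixes p :: nat and m :: enat
  assumes p_prime: "prime p"
    and k_Fp_alg: "(of_nat p :: 'k::comm_ring_1) = 0"
    and rho_surj: "\<forall>Q. \<exists>P :: (nat \<times> 'k) ipoly. Q - iota P \<in> HSA_J_ideal m"
  shows
    "iota ` (HSk_ideal m :: (nat \<times> 'k) ipoly set) \<subseteq> HSA_ideal m
     \<and> phibar m ` (HSA_ideal m :: (nat \<times> (nat \<Rightarrow> 'k)) ipoly set) \<subseteq> HSk_ideal m
     \<and> (\<forall>P :: (nat \<times> 'k) ipoly. phibar m (iota P) - P \<in> HSk_ideal m)
     \<and> phibar m ` (J_ideal m :: (nat \<times> (nat \<Rightarrow> 'k)) ipoly set) \<subseteq> HSk_ideal m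
     \<and> phibar m ` (HSA_J_ideal m :: (nat \<times> (nat \<Rightarrow> 'k)) ipoly set) \<subseteq> HSk_ideal m
     \<and> (\<forall>P :: (nat \<times> 'k) ipoly. iota P \<in> HSA_J_ideal m \<longrightarrow> P \<in> HSk_ideal m)
     \<and> (\<forall>Q. \<exists>P :: (nat \<times> 'k) ipoly. Q - iota P \<in> HSA_J_ideal m)"
proof -
  have c2: "phibar m ` (HSA_ideal m :: (nat \<times> (nat \<Rightarrow> 'k)) ipoly set) \<subseteq> HSk_ideal m"
  proof
    fix y assume "y \<in> phibar m ` (HSA_ideal m :: (nat \<times> (nat \<Rightarrow> 'k)) ipoly set)"
    then obtain x where x: "x \<in> HSA_ideal m" "y = phibar m x" by blast
    show "y \<in> HSk_ideal m"
      unfolding x(2) phibar_def HSk_ideal_def hs_ideal_def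
      by (rule gi_hom[OF _ x(1)[unfolded HSA_ideal_def hs_ideal_def]])
         (use phibar_rel in \<open>auto simp: phibar_def HSk_ideal_def hs_ideal_def\<close>)
  qed
  have c4: "phibar m ` (J_ideal m :: (nat \<times> (nat \<Rightarrow> 'k)) ipoly set) \<subseteq> HSk_ideal m"
  proof
    fix y assume "y \<in> phibar m ` (J_ideal m :: (nat \<times> (nat \<Rightarrow> 'k)) ipoly set)"
    then obtain x where x: "x \<in> J_ideal m" "y = phibar m x" by blast
    show "y \<in> HSk_ideal m"
      unfolding x(2) phibar_def HSk_ideal_def hs_ideal_def
      by (rule gi_hom[OF _ x(1)[unfolded J_ideal_def]])
         (use phibar_J in \<open>auto simp: phibar_def HSk_ideal_def hs_ideal_def\<close>)
  qed
  have c5: "phibar m ` (HSA_J_ideal m :: (nat \<times> (nat \<Rightarrow> 'k)) ipoly set) \<subseteq> HSk_ideal m"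
  proof
    fix y assume "y \<in> phibar m ` (HSA_J_ideal m :: (nat \<times> (nat \<Rightarrow> 'k)) ipoly set)"
    then obtain x where x: "x \<in> HSA_J_ideal m" "y = phibar m x" by blast
    show "y \<in> HSk_ideal m"
      unfolding x(2) phibar_def HSk_ideal_def hs_ideal_def
      by (rule gi_hom[OF _ x(1)[unfolded HSA_J_ideal_def]])
         (use phibar_J phibar_rel in \<open>auto simp: phibar_def HSk_ideal_def hs_ideal_def\<close>)
  qed
  have c6: "\<forall>P :: (nat \<times> 'k) ipoly. iota P \<in> HSA_J_ideal m \<longrightarrow> P \<in> HSk_ideal m"
  proof (intro allI impI)
    fix P :: "(nat \<times> 'k) ipoly"
    assume "iota P \<in> HSA_J_ideal m"
    then have "phibar m (iota P) \<in> HSk_ideal m" using c5 by blast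
    moreover have "P - phibar m (iota P) \<in> HSk_ideal m"
      using claim3[of m P] unfolding HSk_ideal_def hs_ideal_def by (rule cg_sym)
    ultimately show "P \<in> HSk_ideal m" unfolding HSk_ideal_def hs_ideal_def by (rule gi_cg[rotated])
  qed
  show ?thesis using claim1 c2 claim3 c4 c5 c6 rho_surj by blast
qed


end
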